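(* Let $k$ be an infinite field and $n\geq 1$. Then the canonical homomorphism $\mathrm{BCr}_n(k)\to\mathrm{Sym}(\mathbb{P}^n(k))$ is injective.
   Context: $\mathrm{BCr}_n(k)$ is the group of birational self-maps $f$ of $\mathbb{P}^n$ over $k$ such that both $f$ and $f^{-1}$ are defined at every point of $\mathbb{P}^n(k)$; the canonical homomorphism sends $f$ to the permutation it induces on $\mathbb{P}^n(k)$. *)

theory Defs
  imports Main "HOL-Library.Poly_Mapping"
begin

text \<open>Polynomials in the variables x_0, x_1, ... over k, as finitely supported maps
  from monomials (exponent vectors nat =>0 nat) to coefficients.\<close>
type_synonym 'k mpol = "(nat \<Rightarrow>\<^sub>0 nat) \<Rightarrow>\<^sub>0 'k"

definition mon_deg :: "(nat \<Rightarrow>\<^sub>0 nat) \<Rightarrow> nat" where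
  "mon_deg m = (\<Sum>i\<in>Poly_Mapping.keys m. Poly_Mapping.lookup m i)"

definition mvar :: "nat \<Rightarrow> 'k::comm_ring_1 mpol" where
  "mvar i = Poly_Mapping.single (Poly_Mapping.single i 1) 1"

definition mconst :: "'k::comm_ring_1 \<Rightarrow> 'k mpol" where
  "mconst c = Poly_Mapping.single 0 c"

definition meval :: "'k::comm_ring_1 mpol \<Rightarrow> (nat \<Rightarrow> 'k) \<Rightarrow> 'k" where
  "meval p x = (\<Sum>m\<in>Poly_Mapping.keys p. Poly_Mapping.lookup p m * (\<Prod>i\<in>Poly_Mapping.keys m. x i ^ Poly_Mapping.lookup m i))"

definition msubst :: "'k::comm_ring_1 mpol \<Rightarrow> (nat \<Rightarrow> 'k mpol) \<Rightarrow> 'k mpol" where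
  "msubst p g = (\<Sum>m\<in>Poly_Mapping.keys p. mconst (Poly_Mapping.lookup p m) * (\<Prod>i\<in>Poly_Mapping.keys m. g i ^ Poly_Mapping.lookup m i))"

definition homogeneous :: "nat \<Rightarrow> 'k::comm_ring_1 mpol \<Rightarrow> bool" where
  "homogeneous d p \<longleftrightarrow> (\<forall>m\<in>Poly_Mapping.keys p. mon_deg m = d)"

definition mpol_in :: "nat \<Rightarrow> 'k::comm_ring_1 mpol \<Rightarrow> bool" where
  "mpol_in n p \<longleftrightarrow> (\<forall>m\<in>Poly_Mapping.keys p. Poly_Mapping.keys m \<subseteq> {..n})"

text \<open>A representative (F_0 : ... : F_n) of a rational self-map of P^n over k:
  homogeneous polynomials of a common degree in x_0..x_n, not all zero.\<close>
definition hom_tuple :: "nat \<Rightarrow> (nat \<Rightarrow> 'k::comm_ring_1 mpol) \<Rightarrow> bool" where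
  "hom_tuple n F \<longleftrightarrow> (\<exists>d. \<forall>i\<le>n. homogeneous d (F i)) \<and> (\<forall>i\<le>n. mpol_in n (F i))
     \<and> (\<exists>i\<le>n. F i \<noteq> 0) \<and> (\<forall>i>n. F i = 0)"

text \<open>Two representatives define the same rational map.\<close>
definition rm_equiv :: "nat \<Rightarrow> (nat \<Rightarrow> 'k::comm_ring_1 mpol) \<Rightarrow> (nat \<Rightarrow> 'k mpol) \<Rightarrow> bool" where
  "rm_equiv n F G \<longleftrightarrow> (\<forall>i\<le>n. \<forall>j\<le>n. F i * G j = F j * G i)"

definition rm_id :: "nat \<Rightarrow> nat \<Rightarrow> 'k::comm_ring_1 mpol" where
  "rm_id n i = (if i \<le> n then mvar i else 0)"

definition rm_comp :: "(nat \<Rightarrow> 'k::comm_ring_1 mpol) \<Rightarrow> (nat \<Rightarrow> 'k mpol) \<Rightarrow> nat \<Rightarrow> 'k mpol" where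
  "rm_comp F G i = msubst (F i) G"

definition birational_inverse :: "nat \<Rightarrow> (nat \<Rightarrow> 'k::comm_ring_1 mpol) \<Rightarrow> (nat \<Rightarrow> 'k mpol) \<Rightarrow> bool" where
  "birational_inverse n F G \<longleftrightarrow> hom_tuple n F \<and> hom_tuple n G
     \<and> hom_tuple n (rm_comp F G) \<and> hom_tuple n (rm_comp G F)
     \<and> rm_equiv n (rm_comp G F) (rm_id n) \<and> rm_equiv n (rm_comp F G) (rm_id n)"

text \<open>Points of P^n(k): nonzero vectors (x_0, ..., x_n), coordinates beyond n equal 0.\<close>
definition proj_point :: "nat \<Rightarrow> (nat \<Rightarrow> 'k::field) \<Rightarrow> bool" where
  "proj_point n x \<longleftrightarrow> (\<forall>i>n. x i = 0) \<and> (\<exists>i\<le>n. x i \<noteq> 0)"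

definition proj_eq :: "nat \<Rightarrow> (nat \<Rightarrow> 'k::field) \<Rightarrow> (nat \<Rightarrow> 'k) \<Rightarrow> bool" where
  "proj_eq n x y \<longleftrightarrow> (\<exists>c. c \<noteq> 0 \<and> (\<forall>i\<le>n. y i = c * x i))"

definition defined_at :: "nat \<Rightarrow> (nat \<Rightarrow> 'k::field mpol) \<Rightarrow> (nat \<Rightarrow> 'k) \<Rightarrow> bool" where
  "defined_at n F x \<longleftrightarrow> (\<exists>F'. hom_tuple n F' \<and> rm_equiv n F F' \<and> (\<exists>i\<le>n. meval (F' i) x \<noteq> 0))"

definition maps_to :: "nat \<Rightarrow> (nat \<Rightarrow> 'k::field mpol) \<Rightarrow> (nat \<Rightarrow> 'k) \<Rightarrow> (nat \<Rightarrow> 'k) \<Rightarrow> bool" where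
  "maps_to n F x y \<longleftrightarrow> (\<exists>F'. hom_tuple n F' \<and> rm_equiv n F F' \<and> (\<exists>i\<le>n. meval (F' i) x \<noteq> 0)
       \<and> proj_eq n (\<lambda>i. meval (F' i) x) y)"

definition BCr :: "nat \<Rightarrow> (nat \<Rightarrow> 'k::field mpol) \<Rightarrow> bool" where
  "BCr n F \<longleftrightarrow> (\<exists>G. birational_inverse n F G
      \<and> (\<forall>x. proj_point n x \<longrightarrow> defined_at n F x)
      \<and> (\<forall>x. proj_point n x \<longrightarrow> defined_at n G x))"

end

theory Submission imports Defs "HOL-Computational_Algebra.Polynomial"
begin

definition mev :: "(nat \<Rightarrow>\<^sub>0 nat) \<Rightarrow> (nat \<Rightarrow> 'k::comm_ring_1) \<Rightarrow> 'k" where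
  "mev m x = (\<Prod>i\<in>Poly_Mapping.keys m. x i ^ Poly_Mapping.lookup m i)"

lemma mev_superset:
  assumes "finite S" "Poly_Mapping.keys m \<subseteq> S"
  shows "mev m x = (\<Prod>i\<in>S. x i ^ Poly_Mapping.lookup m i)"
  unfolding mev_def
  by (rule prod.mono_neutral_left[OF assms]) (auto simp: in_keys_iff)

lemma mev_add: "mev (a + b) x = mev a x * mev b x"
proof -
  let ?S = "Poly_Mapping.keys a \<union> Poly_Mapping.keys b"
  have "mev (a + b) x = (\<Prod>i\<in>?S. x i ^ Poly_Mapping.lookup (a+b) i)"
    by (rule mev_superset) (auto dest: keys_add[THEN subsetD])
  also have "\<dots> = (\<Prod>i\<in>?S. x i ^ Poly_Mapping.lookup a i * x i ^ Poly_Mapping.lookup b i)"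
    by (simp add: lookup_add power_add)
  also have "\<dots> = mev a x * mev b x"
    by (simp add: prod.distrib mev_superset[of ?S a] mev_superset[of ?S b])
  finally show ?thesis .
qed

lemma meval_alt: "meval p x = (\<Sum>m\<in>Poly_Mapping.keys p. Poly_Mapping.lookup p m * mev m x)"
  unfolding meval_def mev_def ..

lemma meval_superset:
  assumes "finite S" "Poly_Mapping.keys p \<subseteq> S"
  shows "meval p x = (\<Sum>m\<in>S. Poly_Mapping.lookup p m * mev m x)"
  unfolding meval_alt
  by (rule sum.mono_neutral_left[OF assms]) (auto simp: in_keys_iff)

lemma meval_add: "meval (p + q) x = meval p x + meval q x"
proof -
  let ?S = "Poly_Mapping.keys p \<union> Poly_Mapping.keys q"
  have "meval (p + q) x = (\<Sum>m\<in>?S. Poly_Mapping.lookup (p+q) m * mev m x)"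
    by (rule meval_superset) (auto dest: keys_add[THEN subsetD])
  also have "\<dots> = meval p x + meval q x"
    by (simp add: lookup_add distrib_right sum.distrib meval_superset[of ?S p] meval_superset[of ?S q])
  finally show ?thesis .
qed

lemma meval_zero: "meval 0 x = 0"
  by (simp add: meval_def)

lemma meval_sum: "meval (\<Sum>a\<in>A. f a) x = (\<Sum>a\<in>A. meval (f a) x)"
  by (induction A rule: infinite_finite_induct) (auto simp: meval_zero meval_add)

lemma meval_single: "meval (Poly_Mapping.single m c) x = c * mev m x"
  by (simp add: meval_alt)

lemma pm_decomp: "p = (\<Sum>m\<in>Poly_Mapping.keys p. Poly_Mapping.single m (Poly_Mapping.lookup p m))"
  by (rule poly_mapping_eqI) (auto simp: lookup_sum lookup_single when_def in_keys_iff
      sum.delta[where 'b='b] intro: sum.neutral)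

lemma meval_mult: "meval (p * q) x = meval p x * meval q x"
proof -
  let ?P = "Poly_Mapping.keys p" and ?Q = "Poly_Mapping.keys q"
  have "p * q = (\<Sum>m\<in>?P. Poly_Mapping.single m (Poly_Mapping.lookup p m)) *
                (\<Sum>m'\<in>?Q. Poly_Mapping.single m' (Poly_Mapping.lookup q m'))"
    using pm_decomp[of p] pm_decomp[of q] by simp
  also have "\<dots> = (\<Sum>m\<in>?P. \<Sum>m'\<in>?Q. Poly_Mapping.single (m + m') (Poly_Mapping.lookup p m * Poly_Mapping.lookup q m'))"
    by (simp only: sum_product mult_single)
  finally have "meval (p * q) x = (\<Sum>m\<in>?P. \<Sum>m'\<in>?Q. Poly_Mapping.lookup p m * Poly_Mapping.lookup q m' * (mev m x * mev m' x))"
    by (simp add: meval_sum meval_single mev_add)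
  also have "\<dots> = meval p x * meval q x"
    by (simp only: meval_alt sum_product mult_ac)
  finally show ?thesis .
qed

lemma meval_diff: "meval (p - q) x = meval p x - meval (q::'k::comm_ring_1 mpol) x"
  using meval_add[of "p - q" q x] by simp

lemma mpol_in_mult: "mpol_in n p \<Longrightarrow> mpol_in n q \<Longrightarrow> mpol_in n (p * q)"
  unfolding mpol_in_def
  apply (intro ballI)
  apply (drule keys_mult[THEN subsetD])
  apply clarify
  apply (drule keys_add[THEN subsetD])
  apply blast
  done

lemma digits_unique:
  fixes D :: nat
  assumes "D > 0"
  shows "(\<forall>i\<le>n. a i < D) \<Longrightarrow> (\<forall>i\<le>n. b i < D) \<Longrightarrow>
    (\<Sum>i\<le>n. a i * D ^ i) = (\<Sum>i\<le>n. b i * D ^ i) \<Longrightarrow> \<forall>i\<le>n. a i = b i"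
proof (induction n arbitrary: a b)
  case 0
  then show ?case by simp
next
  case (Suc n)
  have ea: "(\<Sum>i\<le>Suc n. a i * D ^ i) = a 0 + D * (\<Sum>i\<le>n. a (Suc i) * D ^ i)"
    unfolding sum.atMost_Suc_shift by (simp add: sum_distrib_left mult_ac)
  have eb: "(\<Sum>i\<le>Suc n. b i * D ^ i) = b 0 + D * (\<Sum>i\<le>n. b (Suc i) * D ^ i)"
    unfolding sum.atMost_Suc_shift by (simp add: sum_distrib_left mult_ac)
  have a0: "a 0 < D" "b 0 < D" using Suc.prems by auto
  have "(a 0 + D * (\<Sum>i\<le>n. a (Suc i) * D ^ i)) mod D = (b 0 + D * (\<Sum>i\<le>n. b (Suc i) * D ^ i)) mod D"
    using Suc.prems(3) ea eb by simp
  hence h0: "a 0 = b 0" using a0 by simp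
  have "(a 0 + D * (\<Sum>i\<le>n. a (Suc i) * D ^ i)) div D = (b 0 + D * (\<Sum>i\<le>n. b (Suc i) * D ^ i)) div D"
    using Suc.prems(3) ea eb by simp
  hence "(\<Sum>i\<le>n. a (Suc i) * D ^ i) = (\<Sum>i\<le>n. b (Suc i) * D ^ i)" using a0 assms by simp
  hence "\<forall>i\<le>n. a (Suc i) = b (Suc i)"
    using Suc.IH[of "\<lambda>i. a (Suc i)" "\<lambda>i. b (Suc i)"] Suc.prems by auto
  then show ?case
  proof (intro allI impI)
    fix i assume "i \<le> Suc n" and hs: "\<forall>i\<le>n. a (Suc i) = b (Suc i)"
    then show "a i = b i" using h0 by (cases i) auto
  qed
qed

lemma identity_thm:
  fixes p q :: "'k::field mpol"
  assumes inf: "infinite (UNIV::'k set)" and mp: "mpol_in n p" and mq: "mpol_in n q"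
    and ev: "\<forall>x. proj_point n x \<longrightarrow> meval p x = meval q x"
  shows "p = q"
proof -
  define K where "K = Poly_Mapping.keys p \<union> Poly_Mapping.keys q"
  have finK: "finite K" unfolding K_def by simp
  have Kn: "\<And>m. m \<in> K \<Longrightarrow> Poly_Mapping.keys m \<subseteq> {..n}"
    using mp mq unfolding K_def mpol_in_def by blast
  define D where "D = Suc (Max ((\<lambda>(m,i). Poly_Mapping.lookup m i) ` (K \<times> {..n})))"
  have Dpos: "D > 0" unfolding D_def by simp
  have Dlt: "Poly_Mapping.lookup m i < D" if "m \<in> K" "i \<le> n" for m i
  proof -
    have "Poly_Mapping.lookup m i \<in> (\<lambda>(m,i). Poly_Mapping.lookup m i) ` (K \<times> {..n})"
      using that by force
    hence "Poly_Mapping.lookup m i \<le> Max ((\<lambda>(m,i). Poly_Mapping.lookup m i) ` (K \<times> {..n}))"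
      using finK by (intro Max_ge) auto
    thus ?thesis unfolding D_def by simp
  qed
  define enc where "enc m = (\<Sum>i\<le>n. Poly_Mapping.lookup m i * D ^ i)" for m :: "nat \<Rightarrow>\<^sub>0 nat"
  have inj: "inj_on enc K"
  proof (rule inj_onI)
    fix m m' assume m: "m \<in> K" "m' \<in> K" "enc m = enc m'"
    have le: "\<forall>i\<le>n. Poly_Mapping.lookup m i = Poly_Mapping.lookup m' i"
      using digits_unique[OF Dpos, of n "Poly_Mapping.lookup m" "Poly_Mapping.lookup m'"] m Dlt
      unfolding enc_def by blast
    show "m = m'"
    proof (rule poly_mapping_eqI)
      fix i show "Poly_Mapping.lookup m i = Poly_Mapping.lookup m' i"
      proof (cases "i \<le> n")
        case True then show ?thesis using le by blast
      next
        case False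
        hence "i \<notin> Poly_Mapping.keys m" "i \<notin> Poly_Mapping.keys m'" using Kn m by auto
        then show ?thesis by (simp add: in_keys_iff)
      qed
    qed
  qed
  define U where "U r = (\<Sum>m\<in>Poly_Mapping.keys r. monom (Poly_Mapping.lookup r m) (enc m))" for r :: "'k mpol"
  define xt where "xt t = (\<lambda>i. if i \<le> n then t ^ (D ^ i) else (0::'k))" for t
  have mev_xt: "mev m (xt t) = t ^ enc m" if "m \<in> K" for m t
  proof -
    have "mev m (xt t) = (\<Prod>i\<in>{..n}. xt t i ^ Poly_Mapping.lookup m i)"
      by (rule mev_superset) (use Kn that in auto)
    also have "\<dots> = (\<Prod>i\<in>{..n}. t ^ (Poly_Mapping.lookup m i * D ^ i))"
      by (rule prod.cong) (auto simp: xt_def power_mult[symmetric] mult.commute)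
    also have "\<dots> = t ^ enc m" unfolding enc_def by (simp add: power_sum)
    finally show ?thesis .
  qed
  have polyU: "poly (U r) t = meval r (xt t)" if "Poly_Mapping.keys r \<subseteq> K" for r t
    unfolding U_def meval_alt poly_sum poly_monom
    by (rule sum.cong) (use that mev_xt in auto)
  have Ueq: "U p = U q"
  proof (rule ccontr)
    assume "U p \<noteq> U q"
    hence fin: "finite {t. poly (U p - U q) t = 0}" by (intro poly_roots_finite) simp
    have "UNIV - {0} \<subseteq> {t. poly (U p - U q) t = 0}"
    proof
      fix t :: 'k assume "t \<in> UNIV - {0}"
      hence "proj_point n (xt t)" unfolding proj_point_def xt_def by auto
      hence "meval p (xt t) = meval q (xt t)" using ev by blast
      thus "t \<in> {t. poly (U p - U q) t = 0}"
        using polyU[of p t] polyU[of q t] unfolding K_def by auto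
    qed
    hence "finite (UNIV - {0::'k})" using fin finite_subset by blast
    thus False using inf by simp
  qed
  have coeffU: "coeff (U r) (enc m0) = Poly_Mapping.lookup r m0"
    if "Poly_Mapping.keys r \<subseteq> K" "m0 \<in> K" for r m0
  proof -
    have "coeff (U r) (enc m0) = (\<Sum>m\<in>Poly_Mapping.keys r. if m = m0 then Poly_Mapping.lookup r m else 0)"
      unfolding U_def coeff_sum coeff_monom
      by (rule sum.cong) (use that inj in \<open>auto simp: inj_on_eq_iff\<close>)
    also have "\<dots> = Poly_Mapping.lookup r m0"
      by (simp add: sum.delta in_keys_iff)
    finally show ?thesis .
  qed
  show "p = q"
  proof (rule poly_mapping_eqI)
    fix m0 show "Poly_Mapping.lookup p m0 = Poly_Mapping.lookup q m0"
    proof (cases "m0 \<in> K")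
      case True
      then show ?thesis using coeffU[of p m0] coeffU[of q m0] Ueq unfolding K_def by auto
    next
      case False
      then show ?thesis unfolding K_def by (simp add: in_keys_iff)
    qed
  qed
qed

theorem proposition4p19:
  fixes n :: nat and F G :: "nat \<Rightarrow> 'k::field mpol"
  assumes "infinite (UNIV :: 'k set)" and "n \<ge> 1"
    and "BCr n F" and "BCr n G"
    and "\<forall>x y. proj_point n x \<longrightarrow> (maps_to n F x y \<longleftrightarrow> maps_to n G x y)"
  shows "rm_equiv n F G"
proof -
  have hF: "hom_tuple n F" using assms(3) unfolding BCr_def birational_inverse_def by blast
  have hG: "hom_tuple n G" using assms(4) unfolding BCr_def birational_inverse_def by blast
  have mF: "\<And>i. i \<le> n \<Longrightarrow> mpol_in n (F i)" using hF unfolding hom_tuple_def by blast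
  have mG: "\<And>i. i \<le> n \<Longrightarrow> mpol_in n (G i)" using hG unfolding hom_tuple_def by blast
  have pt: "meval (F i) x * meval (G j) x = meval (F j) x * meval (G i) x"
    if x: "proj_point n x" and ij: "i \<le> n" "j \<le> n" for x i j
  proof (cases "\<forall>a\<le>n. meval (F a) x = 0")
    case True
    then show ?thesis using ij by simp
  next
    case False
    then obtain a where a: "a \<le> n" "meval (F a) x \<noteq> 0" by blast
    have "rm_equiv n F F" unfolding rm_equiv_def by (simp add: mult.commute)
    moreover have "proj_eq n (\<lambda>i. meval (F i) x) (\<lambda>i. meval (F i) x)"
      unfolding proj_eq_def by (rule exI[of _ 1]) simp
    ultimately have "maps_to n F x (\<lambda>i. meval (F i) x)"
      unfolding maps_to_def using hF a by blast
    hence "maps_to n G x (\<lambda>i. meval (F i) x)" using assms(5) x by blast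
    then obtain G' c where eq: "rm_equiv n G G'" and c: "c \<noteq> 0"
      and Fx: "\<forall>i\<le>n. meval (F i) x = c * meval (G' i) x"
      unfolding maps_to_def proj_eq_def by blast
    have "G i * G' j = G j * G' i" using eq ij unfolding rm_equiv_def by blast
    hence e: "meval (G i) x * meval (G' j) x = meval (G j) x * meval (G' i) x"
      by (metis meval_mult)
    show ?thesis using Fx ij e
      by (simp add: mult_ac)
  qed
  show ?thesis unfolding rm_equiv_def
  proof (intro allI impI)
    fix i j assume ij: "i \<le> n" "j \<le> n"
    show "F i * G j = F j * G i"
      by (rule identity_thm[OF assms(1), of n]) (use ij mF mG pt in \<open>auto intro!: mpol_in_mult simp: meval_mult\<close>)
  qed
qed

end
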